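(* Let $n_0$ be a nonnegative bounded measurable function on $(0,\infty)$ with $\lim_{x\to\infty}x^2n_0(x)=0$, and let $n$ be the solution of the Kompaneets problem with initial data $n_0$. Then for any $t>s>0$, \[ \int_0^\infty n_t^2\,dx+\int_s^t\int_0^\infty\big[n_\tau^2+x^2(\partial_xn_\tau)^2\big]\,dx\,d\tau\le\int_0^\infty n_s^2\,dx+2\int_s^t\int_0^\infty xn_\tau^2\,dx\,d\tau. \]
   Context: The Kompaneets problem: for $x>0$, $t>0$, $\partial_t n = \partial_x J$ with $J(x,n) = x^2\partial_x n + (x^2-2x)n + n^2$, together with $\lim_{x\to\infty} J(x,n_t)=0$; no boundary condition at $x=0$. $n_t(x)=n(x,t)$; the solution is the unique nonnegative one in $C([0,\infty);L^1)\cap L^\infty_{loc}([0,\infty);L^\infty)\cap C^{2,1}((0,\infty)^2)$. *)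

theory Defs
  imports "HOL-Analysis.Analysis"
begin

definition kflux :: "real \<Rightarrow> real \<Rightarrow> real \<Rightarrow> real" where
  "kflux x nv nxv = x\<^sup>2 * nxv + (x\<^sup>2 - 2 * x) * nv + nv\<^sup>2"

text \<open>n x t stands for n(x,t). A (nonnegative) solution of the Kompaneets problem
  with initial data n0, in the class
  C([0,oo);L^1) \<inter> L^oo_loc([0,oo);L^oo) \<inter> C^{2,1}((0,oo)^2).\<close>
definition kompaneets_solution ::
  "(real \<Rightarrow> real) \<Rightarrow> (real \<Rightarrow> real \<Rightarrow> real) \<Rightarrow> bool" where
  "kompaneets_solution n0 n \<longleftrightarrow>
     \<comment> \<open>nonnegativity\<close>
     (\<forall>x>0. \<forall>t>0. 0 \<le> n x t) \<and>
     \<comment> \<open>initial datum (as element of L^1)\<close>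
     (AE x in lborel. x > 0 \<longrightarrow> n x 0 = n0 x) \<and>
     \<comment> \<open>C([0,oo); L^1(0,oo))\<close>
     (\<forall>t\<ge>0. set_integrable lborel {0<..} (\<lambda>x. n x t)) \<and>
     (\<forall>t0\<ge>0. ((\<lambda>t. set_lebesgue_integral lborel {0<..} (\<lambda>x. \<bar>n x t - n x t0\<bar>))
                   \<longlongrightarrow> 0) (at t0 within {0..})) \<and>
     \<comment> \<open>L^oo_loc([0,oo); L^oo(0,oo))\<close>
     (\<forall>T>0. \<exists>M. \<forall>t\<in>{0..T}. AE x in lborel. x > 0 \<longrightarrow> \<bar>n x t\<bar> \<le> M) \<and>
     \<comment> \<open>C^{2,1}((0,oo)^2) together with the equation and the flux condition\<close>
     (\<exists>nx nxx nt :: real \<Rightarrow> real \<Rightarrow> real.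
        continuous_on ({0<..} \<times> {0<..}) (\<lambda>(x,t). n x t) \<and>
        continuous_on ({0<..} \<times> {0<..}) (\<lambda>(x,t). nx x t) \<and>
        continuous_on ({0<..} \<times> {0<..}) (\<lambda>(x,t). nxx x t) \<and>
        continuous_on ({0<..} \<times> {0<..}) (\<lambda>(x,t). nt x t) \<and>
        (\<forall>x>0. \<forall>t>0.
           ((\<lambda>y. n y t) has_real_derivative nx x t) (at x) \<and>
           ((\<lambda>y. nx y t) has_real_derivative nxx x t) (at x) \<and>
           ((\<lambda>s. n x s) has_real_derivative nt x t) (at t) \<and>
           \<comment> \<open>the equation  d_t n = d_x J(x,n)\<close>
           ((\<lambda>y. kflux y (n y t) (nx y t)) has_real_derivative nt x t) (at x)) \<and>
        \<comment> \<open>no-flux condition at infinity\<close>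
        (\<forall>t>0. ((\<lambda>x. kflux x (n x t) (nx x t)) \<longlongrightarrow> 0) at_top))"

end

theory Submission
  imports Defs
begin


locale kset =
  fixes n nx nt :: "real \<Rightarrow> real \<Rightarrow> real" and s t M :: real
  assumes st: "0 < s" "s < t"
  and cn: "continuous_on ({0<..}\<times>{0<..}) (\<lambda>z. n (fst z) (snd z))"
  and cnx: "continuous_on ({0<..}\<times>{0<..}) (\<lambda>z. nx (fst z) (snd z))"
  and cnt: "continuous_on ({0<..}\<times>{0<..}) (\<lambda>z. nt (fst z) (snd z))"
  and dn: "\<And>x \<tau>. x>0 \<Longrightarrow> \<tau>>0 \<Longrightarrow> ((\<lambda>y. n y \<tau>) has_real_derivative nx x \<tau>) (at x)"
  and dnt: "\<And>x \<tau>. x>0 \<Longrightarrow> \<tau>>0 \<Longrightarrow> ((\<lambda>\<sigma>. n x \<sigma>) has_real_derivative nt x \<tau>) (at \<tau>)"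
  and dJ: "\<And>x \<tau>. x>0 \<Longrightarrow> \<tau>>0 \<Longrightarrow> ((\<lambda>y. kflux y (n y \<tau>) (nx y \<tau>)) has_real_derivative nt x \<tau>) (at x)"
  and nn: "\<And>x \<tau>. x>0 \<Longrightarrow> \<tau>>0 \<Longrightarrow> 0 \<le> n x \<tau>"
  and nM: "\<And>x \<tau>. x>0 \<Longrightarrow> \<tau> \<in> {s..t} \<Longrightarrow> n x \<tau> \<le> M"
begin

definition "Phi x \<tau> = 2*x\<^sup>2*n x \<tau>*nx x \<tau> + (x\<^sup>2-2*x)*(n x \<tau>)\<^sup>2 + 4/3*(n x \<tau>)^3"

lemma Phi_deriv:
  assumes "x>0" "\<tau>>0"
  shows "((\<lambda>y. Phi y \<tau>) has_real_derivative
     (2*n x \<tau>*nt x \<tau> + 2*x\<^sup>2*(nx x \<tau>)\<^sup>2 - (2*x-2)*(n x \<tau>)\<^sup>2)) (at x)"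
proof -
  have "((\<lambda>y. 2*n y \<tau>*kflux y (n y \<tau>) (nx y \<tau>) - (y\<^sup>2-2*y)*(n y \<tau>)\<^sup>2 - 2/3*(n y \<tau>)^3)
     has_real_derivative
     (2*nx x \<tau>*kflux x (n x \<tau>) (nx x \<tau>) + 2*n x \<tau>*nt x \<tau>
      - ((2*x-2)*(n x \<tau>)\<^sup>2 + (x\<^sup>2-2*x)*(2*n x \<tau>*nx x \<tau>)) - 2/3*(3*(n x \<tau>)\<^sup>2*nx x \<tau>))) (at x)"
    using dn[OF assms] dJ[OF assms]
    by (auto intro!: derivative_eq_intros simp: power2_eq_square algebra_simps)
  moreover have "(\<lambda>y. 2*n y \<tau>*kflux y (n y \<tau>) (nx y \<tau>) - (y\<^sup>2-2*y)*(n y \<tau>)\<^sup>2 - 2/3*(n y \<tau>)^3)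
     = (\<lambda>y. Phi y \<tau>)"
    by (auto simp: Phi_def kflux_def power2_eq_square power3_eq_cube algebra_simps)
  ultimately show ?thesis
    by (auto simp: kflux_def power2_eq_square algebra_simps elim!: DERIV_cong)
qed

lemma cQ:
  assumes "A \<subseteq> {0<..}\<times>{0<..}"
  shows "continuous_on A (\<lambda>z. n (fst z) (snd z))" "continuous_on A (\<lambda>z. nx (fst z) (snd z))"
    "continuous_on A (\<lambda>z. nt (fst z) (snd z))"
  using continuous_on_subset[OF cn assms] continuous_on_subset[OF cnx assms]
    continuous_on_subset[OF cnt assms] by auto


lemma cc[continuous_intros]:
  assumes "continuous_on A f" "continuous_on A g" "\<And>z. z\<in>A \<Longrightarrow> f z > 0 \<and> g z > 0"
  shows "continuous_on A (\<lambda>z. n (f z) (g z))" "continuous_on A (\<lambda>z. nx (f z) (g z))"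
    "continuous_on A (\<lambda>z. nt (f z) (g z))"
proof -
  have P: "continuous_on A (\<lambda>z. (f z, g z))" by (intro continuous_intros assms)
  have S: "(\<lambda>z. (f z, g z)) ` A \<subseteq> {0<..}\<times>{0<..}" using assms(3) by auto
  show "continuous_on A (\<lambda>z. n (f z) (g z))"
    using continuous_on_compose2[OF cn P S] by simp
  show "continuous_on A (\<lambda>z. nx (f z) (g z))"
    using continuous_on_compose2[OF cnx P S] by simp
  show "continuous_on A (\<lambda>z. nt (f z) (g z))"
    using continuous_on_compose2[OF cnt P S] by simp
qed

lemma ftc_time:
  assumes "x > 0"
  shows "((\<lambda>\<tau>. 2*n x \<tau>*nt x \<tau>) has_integral (n x t)\<^sup>2 - (n x s)\<^sup>2) {s..t}"
proof (rule fundamental_theorem_of_calculus)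
  show "s \<le> t" using st by simp
  fix \<tau> assume "\<tau> \<in> {s..t}"
  then have "\<tau> > 0" using st by auto
  have "((\<lambda>\<sigma>. (n x \<sigma>)\<^sup>2) has_real_derivative 2*n x \<tau>*nt x \<tau>) (at \<tau>)"
    using dnt[OF assms \<open>\<tau>>0\<close>] by (auto intro!: derivative_eq_intros)
  then show "((\<lambda>\<sigma>. (n x \<sigma>)\<^sup>2) has_vector_derivative 2*n x \<tau>*nt x \<tau>) (at \<tau> within {s..t})"
    using has_real_derivative_iff_has_vector_derivative has_vector_derivative_at_within by blast
qed

lemma ftc_space:
  assumes "0 < a" "a \<le> b" "\<tau> > 0"
  shows "((\<lambda>x. 2*n x \<tau>*nt x \<tau> + 2*x\<^sup>2*(nx x \<tau>)\<^sup>2 - (2*x-2)*(n x \<tau>)\<^sup>2) has_integral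
      Phi b \<tau> - Phi a \<tau>) {a..b}"
proof (rule fundamental_theorem_of_calculus)
  show "a \<le> b" using assms by simp
  fix x assume "x \<in> {a..b}"
  then have "x > 0" using assms by auto
  then show "((\<lambda>y. Phi y \<tau>) has_vector_derivative 2*n x \<tau>*nt x \<tau> + 2*x\<^sup>2*(nx x \<tau>)\<^sup>2 - (2*x-2)*(n x \<tau>)\<^sup>2) (at x within {a..b})"
    using Phi_deriv[OF _ assms(3)]
    using has_real_derivative_iff_has_vector_derivative has_vector_derivative_at_within by blast
qed

lemma ident:
  assumes "0<\<epsilon>" "\<epsilon><R"
  shows "integral {\<epsilon>..R} (\<lambda>x. (n x t)\<^sup>2) - integral {\<epsilon>..R} (\<lambda>x. (n x s)\<^sup>2)
   = integral {s..t} (\<lambda>\<tau>. Phi R \<tau>) - integral {s..t} (\<lambda>\<tau>. Phi \<epsilon> \<tau>)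
   - 2 * integral {s..t} (\<lambda>\<tau>. integral {\<epsilon>..R} (\<lambda>x. (n x \<tau>)\<^sup>2 + x\<^sup>2*(nx x \<tau>)\<^sup>2))
   + 2 * integral {s..t} (\<lambda>\<tau>. integral {\<epsilon>..R} (\<lambda>x. x*(n x \<tau>)\<^sup>2))"
proof -
  have s0: "s > 0" "s \<le> t" using st by auto
  have c1: "continuous_on {\<epsilon>..R} (\<lambda>x. (n x t)\<^sup>2)" "continuous_on {\<epsilon>..R} (\<lambda>x. (n x s)\<^sup>2)"
    using assms s0 by (auto intro!: continuous_intros)
  have "integral {\<epsilon>..R} (\<lambda>x. (n x t)\<^sup>2) - integral {\<epsilon>..R} (\<lambda>x. (n x s)\<^sup>2)
     = integral {\<epsilon>..R} (\<lambda>x. (n x t)\<^sup>2 - (n x s)\<^sup>2)"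
    using c1 by (intro integral_diff[symmetric] integrable_continuous_interval)
  also have "\<dots> = integral {\<epsilon>..R} (\<lambda>x. integral {s..t} (\<lambda>\<tau>. 2*n x \<tau>*nt x \<tau>))"
    using assms by (intro integral_cong) (auto intro!: integral_unique[symmetric] ftc_time)
  also have "\<dots> = integral {s..t} (\<lambda>\<tau>. integral {\<epsilon>..R} (\<lambda>x. 2*n x \<tau>*nt x \<tau>))"
  proof -
    have "continuous_on (cbox (\<epsilon>,s) (R,t)) (\<lambda>(x,\<tau>). 2*n x \<tau>*nt x \<tau>)"
      unfolding cbox_Pair_eq cbox_interval case_prod_beta'
      using assms s0 by (auto intro!: continuous_intros)
    from integral_swap_continuous[OF this] show ?thesis by (simp add: cbox_interval)
  qed
  also have "\<dots> = integral {s..t} (\<lambda>\<tau>. Phi R \<tau> - Phi \<epsilon> \<tau>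
        - 2 * integral {\<epsilon>..R} (\<lambda>x. (n x \<tau>)\<^sup>2 + x\<^sup>2*(nx x \<tau>)\<^sup>2)
        + 2 * integral {\<epsilon>..R} (\<lambda>x. x*(n x \<tau>)\<^sup>2))"
  proof (intro integral_cong integral_unique)
    fix \<tau> assume "\<tau> \<in> {s..t}"
    then have "\<tau> > 0" using s0 by auto
    have i1: "(\<lambda>x. (n x \<tau>)\<^sup>2 + x\<^sup>2*(nx x \<tau>)\<^sup>2) integrable_on {\<epsilon>..R}"
      using assms \<open>\<tau>>0\<close> by (auto intro!: integrable_continuous_interval continuous_intros)
    have i2: "(\<lambda>x. x*(n x \<tau>)\<^sup>2) integrable_on {\<epsilon>..R}"
      using assms \<open>\<tau>>0\<close> by (auto intro!: integrable_continuous_interval continuous_intros)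
    have "((\<lambda>x. (2*n x \<tau>*nt x \<tau> + 2*x\<^sup>2*(nx x \<tau>)\<^sup>2 - (2*x-2)*(n x \<tau>)\<^sup>2)
         - 2 * ((n x \<tau>)\<^sup>2 + x\<^sup>2*(nx x \<tau>)\<^sup>2) + 2 * (x*(n x \<tau>)\<^sup>2)) has_integral
         (Phi R \<tau> - Phi \<epsilon> \<tau>) - 2 * integral {\<epsilon>..R} (\<lambda>x. (n x \<tau>)\<^sup>2 + x\<^sup>2*(nx x \<tau>)\<^sup>2)
        + 2 * integral {\<epsilon>..R} (\<lambda>x. x*(n x \<tau>)\<^sup>2)) {\<epsilon>..R}"
      using assms \<open>\<tau>>0\<close> i1 i2
      by (intro has_integral_add has_integral_diff has_integral_mult_right ftc_space)
         (auto simp: integrable_integral)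
    moreover have "(\<lambda>x. (2*n x \<tau>*nt x \<tau> + 2*x\<^sup>2*(nx x \<tau>)\<^sup>2 - (2*x-2)*(n x \<tau>)\<^sup>2)
         - 2 * ((n x \<tau>)\<^sup>2 + x\<^sup>2*(nx x \<tau>)\<^sup>2) + 2 * (x*(n x \<tau>)\<^sup>2)) = (\<lambda>x. 2*n x \<tau>*nt x \<tau>)"
      by (auto simp: algebra_simps)
    ultimately show "((\<lambda>x. 2*n x \<tau>*nt x \<tau>) has_integral (Phi R \<tau> - Phi \<epsilon> \<tau>
        - 2 * integral {\<epsilon>..R} (\<lambda>x. (n x \<tau>)\<^sup>2 + x\<^sup>2*(nx x \<tau>)\<^sup>2)
        + 2 * integral {\<epsilon>..R} (\<lambda>x. x*(n x \<tau>)\<^sup>2))) {\<epsilon>..R}" by simp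
  qed
  also have "\<dots> = integral {s..t} (\<lambda>\<tau>. Phi R \<tau>) - integral {s..t} (\<lambda>\<tau>. Phi \<epsilon> \<tau>)
   - 2 * integral {s..t} (\<lambda>\<tau>. integral {\<epsilon>..R} (\<lambda>x. (n x \<tau>)\<^sup>2 + x\<^sup>2*(nx x \<tau>)\<^sup>2))
   + 2 * integral {s..t} (\<lambda>\<tau>. integral {\<epsilon>..R} (\<lambda>x. x*(n x \<tau>)\<^sup>2))"
  proof -
    have p1: "continuous_on {s..t} (\<lambda>\<tau>. Phi R \<tau>)" "continuous_on {s..t} (\<lambda>\<tau>. Phi \<epsilon> \<tau>)"
      unfolding Phi_def using assms s0 by (auto intro!: continuous_intros)
    have p2: "continuous_on {s..t} (\<lambda>\<tau>. integral {\<epsilon>..R} (\<lambda>x. (n x \<tau>)\<^sup>2 + x\<^sup>2*(nx x \<tau>)\<^sup>2))"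
      unfolding cbox_interval[symmetric]
      by (rule integral_continuous_on_param)
         (use assms s0 in \<open>auto simp: case_prod_beta' cbox_interval intro!: continuous_intros\<close>)
    have p3: "continuous_on {s..t} (\<lambda>\<tau>. integral {\<epsilon>..R} (\<lambda>x. x*(n x \<tau>)\<^sup>2))"
      unfolding cbox_interval[symmetric]
      by (rule integral_continuous_on_param)
         (use assms s0 in \<open>auto simp: case_prod_beta' cbox_interval intro!: continuous_intros\<close>)
    show ?thesis
      using p1 p2 p3
      by (subst integral_add integral_diff integral_mult_right,
          auto intro!: integrable_continuous_interval continuous_intros)+
  qed
  finally show ?thesis .
qed


definition "h x = integral {s..t} (\<lambda>\<tau>. (n x \<tau>)\<^sup>2)"
definition "hder x = integral {s..t} (\<lambda>\<tau>. 2*n x \<tau>*nx x \<tau>)"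
definition "p x = integral {s..t} (\<lambda>\<tau>. (n x \<tau>)^3)"

lemma h_deriv:
  assumes "x > 0"
  shows "(h has_real_derivative hder x) (at x)"
proof -
  have s0: "s > 0" using st by auto
  have "((\<lambda>x. integral (cbox s t) (\<lambda>\<tau>. (n x \<tau>)\<^sup>2)) has_field_derivative
      integral (cbox s t) (\<lambda>\<tau>. 2*n x \<tau>*nx x \<tau>)) (at x within {0<..})"
  proof (rule leibniz_rule_field_derivative)
    fix y \<tau> :: real assume "y \<in> {0<..}" "\<tau> \<in> cbox s t"
    then have "y > 0" "\<tau> > 0" using s0 by (auto simp: cbox_interval)
    show "((\<lambda>y. (n y \<tau>)\<^sup>2) has_field_derivative 2*n y \<tau>*nx y \<tau>) (at y within {0<..})"
    proof -
      have d: "((\<lambda>y. (n y \<tau>)\<^sup>2) has_real_derivative (2*n y \<tau>*nx y \<tau>)) (at y)"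
        using dn[OF \<open>y>0\<close> \<open>\<tau>>0\<close>] by (auto intro!: derivative_eq_intros)
      show ?thesis using has_field_derivative_at_within[OF d] .
    qed
  next
    fix y :: real assume "y \<in> {0<..}"
    then show "(\<lambda>\<tau>. (n y \<tau>)\<^sup>2) integrable_on cbox s t"
      using s0 by (auto simp: cbox_interval intro!: integrable_continuous_interval continuous_intros)
  next
    show "continuous_on ({0<..} \<times> cbox s t) (\<lambda>(x, \<tau>). 2*n x \<tau>*nx x \<tau>)"
      using s0 by (auto simp: cbox_interval case_prod_beta' intro!: continuous_intros)
  qed (use assms in auto)
  then show ?thesis
    unfolding h_def hder_def cbox_interval using at_within_open[of x "{0<..}"] assms by auto
qed

lemma Phi_int:
  assumes "x > 0"
  shows "integral {s..t} (\<lambda>\<tau>. Phi x \<tau>) = x\<^sup>2*hder x + (x\<^sup>2-2*x)*h x + 4/3*p x"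
proof -
  have s0: "s > 0" using st by auto
  have "(\<lambda>\<tau>. Phi x \<tau>) = (\<lambda>\<tau>. x\<^sup>2*(2*n x \<tau>*nx x \<tau>) + (x\<^sup>2-2*x)*(n x \<tau>)\<^sup>2 + 4/3*(n x \<tau>)^3)"
    by (auto simp: Phi_def algebra_simps)
  then show ?thesis unfolding h_def hder_def p_def
    using assms s0
    by (simp, subst integral_add integral_mult_right,
          auto intro!: integrable_continuous_interval continuous_intros)+
qed

lemma hp_bounds:
  assumes "x > 0"
  shows "0 \<le> h x" "h x \<le> M\<^sup>2*(t-s)" "0 \<le> p x" "p x \<le> M * h x" "0 \<le> M"
proof -
  have s0: "s > 0" "s \<le> t" using st by auto
  have b: "\<And>\<tau>. \<tau> \<in> {s..t} \<Longrightarrow> 0 \<le> n x \<tau> \<and> n x \<tau> \<le> M"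
    using nn nM assms s0 by force
  have i: "(\<lambda>\<tau>. (n x \<tau>)\<^sup>2) integrable_on {s..t}" "(\<lambda>\<tau>. (n x \<tau>)^3) integrable_on {s..t}"
    using assms s0 by (auto intro!: integrable_continuous_interval continuous_intros)
  show "0 \<le> M" using b[of s] s0 by auto
  show "0 \<le> h x" unfolding h_def by (rule integral_nonneg) (use i in auto)
  show "0 \<le> p x" unfolding p_def by (rule integral_nonneg) (use i b in auto)
  have "h x \<le> integral {s..t} (\<lambda>\<tau>. M\<^sup>2)" unfolding h_def
    by (rule integral_le) (use i b in \<open>auto intro!: power_mono\<close>)
  then show "h x \<le> M\<^sup>2*(t-s)" using s0 by simp (metis mult.commute)
  have "p x \<le> integral {s..t} (\<lambda>\<tau>. M * (n x \<tau>)\<^sup>2)" unfolding p_def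
  proof (rule integral_le)
    fix \<tau> assume "\<tau> \<in> {s..t}"
    with b have "0 \<le> n x \<tau>" "n x \<tau> \<le> M" by auto
    then show "(n x \<tau>)^3 \<le> M * (n x \<tau>)\<^sup>2"
      using mult_right_mono[of "n x \<tau>" M "(n x \<tau>)^2"]
      by (simp add: power2_eq_square power3_eq_cube mult.assoc)
  qed (use i in \<open>auto intro: integrable_on_cmult_left[where 'b=real, simplified]\<close>)
  then show "p x \<le> M * h x" unfolding h_def by simp
qed

lemma lower:
  assumes "\<delta> > 0" "e0 > 0"
  shows "\<exists>\<epsilon>. 0 < \<epsilon> \<and> \<epsilon> < e0 \<and> - integral {s..t} (\<lambda>\<tau>. Phi \<epsilon> \<tau>) < \<delta>"
proof (rule ccontr)
  assume "\<not> ?thesis"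
  then have A: "\<And>\<epsilon>. 0 < \<epsilon> \<Longrightarrow> \<epsilon> < e0 \<Longrightarrow> \<delta> \<le> - integral {s..t} (\<lambda>\<tau>. Phi \<epsilon> \<tau>)" by force
  define H where "H = M\<^sup>2*(t-s)"
  have H0: "0 \<le> H" unfolding H_def using st by auto
  define e1 where "e1 = min e0 (\<delta>/(4*H+4))"
  have e1: "0 < e1" "e1 \<le> e0" "e1 \<le> \<delta>/(4*H+4)" using assms H0 by (auto simp: e1_def)
  have hdb: "hder e \<le> - \<delta>/(2*e\<^sup>2)" if "0 < e" "e < e1" for e
  proof -
    have b: "0 \<le> h e" "h e \<le> H" "0 \<le> p e" using hp_bounds[OF \<open>0<e\<close>] by (auto simp: H_def)
    have "\<delta> \<le> -(e\<^sup>2*hder e + (e\<^sup>2-2*e)*h e + 4/3*p e)"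
      using A[of e] that e1 Phi_int[OF \<open>0<e\<close>] by auto
    moreover have "0 \<le> e\<^sup>2 * h e" using b by auto
    moreover have "e * h e \<le> e * H" using b that by (auto intro: mult_left_mono)
    moreover have "e * H \<le> \<delta>/4"
    proof -
      have "e * H \<le> (\<delta>/(4*H+4)) * H" using that e1 H0 by (intro mult_right_mono) auto
      also have "\<dots> \<le> \<delta>/4" using H0 assms by (simp add: field_simps)
      finally show ?thesis .
    qed
    moreover have "(e\<^sup>2-2*e)*h e = e\<^sup>2*h e - 2*(e*h e)" by (simp add: algebra_simps)
    ultimately have "\<delta>/2 \<le> - e\<^sup>2 * hder e" using b by linarith
    then show ?thesis using that by (simp add: field_simps)
  qed
  define b where "b = e1/2"
  have b0: "0 < b" "b < e1" using e1 by (auto simp: b_def)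
  define a where "a = min b (\<delta>/(2*(H + \<delta>/b + 1)))"
  have pos: "0 < 2*(H + \<delta>/b + 1)" using H0 assms b0 by (simp add: add_nonneg_pos)
  have a0: "0 < a" "a \<le> b" using b0 assms pos by (auto simp: a_def simp del: mult_pos_pos)
  have "h b - \<delta>/(2*b) \<le> h a - \<delta>/(2*a)"
  proof (rule DERIV_nonpos_imp_nonincreasing[OF a0(2)])
    fix x assume x: "a \<le> x" "x \<le> b"
    then have "0 < x" "x < e1" using a0 b0 by auto
    have "((\<lambda>y. h y - \<delta>/(2*y)) has_real_derivative hder x + \<delta>/(2*x\<^sup>2)) (at x)"
      using h_deriv[OF \<open>0<x\<close>] \<open>0<x\<close>
      by (auto intro!: derivative_eq_intros simp: power2_eq_square field_simps)
    moreover have "hder x + \<delta>/(2*x\<^sup>2) \<le> 0" using hdb[OF \<open>0<x\<close> \<open>x<e1\<close>] by simp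
    ultimately show "\<exists>y. ((\<lambda>y. h y - \<delta>/(2*y)) has_real_derivative y) (at x) \<and> y \<le> 0" by blast
  qed
  moreover have "0 \<le> h b" "h a \<le> H" using hp_bounds[OF a0(1)] hp_bounds[OF b0(1)] by (auto simp: H_def)
  moreover have "H + \<delta>/b + 1 \<le> \<delta>/(2*a)"
  proof -
    have "a \<le> \<delta>/(2*(H + \<delta>/b + 1))" by (simp add: a_def)
    then have "a * (2*(H + \<delta>/b + 1)) \<le> \<delta>" using pos_le_divide_eq[OF pos] by blast
    then show ?thesis using a0 by (simp add: field_simps)
  qed
  moreover have "\<delta>/(2*b) \<le> \<delta>/b" using assms b0 by (simp add: field_simps)
  ultimately show False by linarith
qed


lemma h_cont: "A \<subseteq> {0<..} \<Longrightarrow> continuous_on A h"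
  by (rule DERIV_continuous_on[of _ _ hder]) (auto intro: has_field_derivative_at_within h_deriv)

lemma upper:
  assumes C: "\<And>a b. 1 \<le> a \<Longrightarrow> a \<le> b \<Longrightarrow>
      integral {s..t} (\<lambda>\<tau>. integral {a..b} (\<lambda>x. x*(n x \<tau>)\<^sup>2)) \<le> C"
    and d: "\<delta> > 0"
  shows "\<exists>R>R0. integral {s..t} (\<lambda>\<tau>. Phi R \<tau>) < \<delta>"
proof (rule ccontr)
  assume "\<not> ?thesis"
  then have A: "\<And>R. R > R0 \<Longrightarrow> \<delta> \<le> integral {s..t} (\<lambda>\<tau>. Phi R \<tau>)" by force
  have s0: "0 < s" "s \<le> t" using st by auto
  define R2 where "R2 = max (max R0 1) (4/3*M+1) + 1"
  have R2: "R2 > R0" "R2 \<ge> 1" "R2 \<ge> 4/3*M+1" unfolding R2_def by (auto simp: max_def)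
  define g where "g R = R\<^sup>2 * h R" for R
  have gd: "(g has_real_derivative 2*R*h R + R\<^sup>2*hder R) (at R)" if "R > 0" for R
    unfolding g_def using h_deriv[OF that] by (auto intro!: derivative_eq_intros)
  have key: "\<delta> \<le> 2*R*h R + R\<^sup>2*hder R + 2 * g R" if "R \<ge> R2" for R
  proof -
    have R: "R > R0" "R > 0" "R\<^sup>2 \<ge> 4/3*M" using R2 that
    proof -
      show "R > R0" "R > 0" using R2 that by auto
      have "R \<le> R\<^sup>2" using R2 that by (simp add: power2_eq_square)
      then show "R\<^sup>2 \<ge> 4/3*M" using R2 that by linarith
    qed
    have b: "0 \<le> h R" "p R \<le> M * h R" using hp_bounds[OF R(2)] by auto
    have "4/3 * p R \<le> R\<^sup>2 * h R"
    proof -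
      have "4/3 * p R \<le> 4/3 * M * h R" using b by simp
      also have "\<dots> \<le> R\<^sup>2 * h R" using R(3) b by (intro mult_right_mono) auto
      finally show ?thesis .
    qed
    moreover have "0 \<le> R * h R" using b R by simp
    moreover have "(R\<^sup>2-2*R)*h R = R\<^sup>2*h R - 2*(R*h R)" by (simp add: algebra_simps)
    ultimately show ?thesis using A[OF R(1)] Phi_int[OF R(2)] by (simp add: g_def)
  qed
  have gl: "g R \<ge> \<delta>/4" if "R \<ge> R2 + 1" for R
  proof -
    have "exp (2*R2) * (g R2 - \<delta>/2) \<le> exp (2*R) * (g R - \<delta>/2)"
    proof (rule DERIV_nonneg_imp_nondecreasing[where f="\<lambda>y. exp (2*y) * (g y - \<delta>/2)"])
      show "R2 \<le> R" using that by simp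
      fix x assume x: "R2 \<le> x" "x \<le> R"
      then have "x > 0" using R2 by auto
      have "((\<lambda>y. exp (2*y) * (g y - \<delta>/2)) has_real_derivative
          exp (2*x) * (2*(g x - \<delta>/2)) + exp (2*x) * (2*x*h x + x\<^sup>2*hder x)) (at x)"
        using gd[OF \<open>x>0\<close>] by (auto intro!: derivative_eq_intros)
      moreover have "0 \<le> exp (2*x) * (2*(g x - \<delta>/2)) + exp (2*x) * (2*x*h x + x\<^sup>2*hder x)"
      proof -
        have "0 \<le> 2*(g x - \<delta>/2) + (2*x*h x + x\<^sup>2*hder x)" using key[OF x(1)] by simp
        then have "0 \<le> exp (2*x) * (2*(g x - \<delta>/2) + (2*x*h x + x\<^sup>2*hder x))" by simp
        then show ?thesis by (simp add: distrib_left)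
      qed
      ultimately show "\<exists>y. ((\<lambda>y. exp (2*y) * (g y - \<delta>/2)) has_real_derivative y) (at x) \<and> 0 \<le> y"
        by blast
    qed
    moreover have "0 \<le> g R2" using hp_bounds[of R2] R2 by (simp add: g_def)
    ultimately have q: "exp (2*R2) * (-\<delta>/2) \<le> exp (2*R) * (g R - \<delta>/2)"
      using mult_left_mono[of "-\<delta>/2" "g R2 - \<delta>/2" "exp (2*R2)"] by simp
    have E: "2 * exp (2*R2) \<le> exp (2*R)"
    proof -
      have "exp (2*R) = exp (2*R2) * exp (2*(R-R2))" by (simp add: exp_add[symmetric] algebra_simps)
      moreover have "2 \<le> exp (2*(R-R2))" by (rule order_trans[OF _ exp_ge_add_one_self]) (use that in \<open>simp add: algebra_simps\<close>)
      ultimately show ?thesis using mult_left_mono[of 2 "exp (2*(R-R2))" "exp (2*R2)"] by (simp add: mult.commute)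
    qed
    have "(\<delta>/2) * (2 * exp (2*R2)) \<le> (\<delta>/2) * exp (2*R)" using E d by (intro mult_left_mono) auto
    then have a1: "\<delta> * exp (2*R2) \<le> \<delta> * exp (2*R) / 2" by simp
    have a2: "- (\<delta> * exp (2*R2)) / 2 \<le> exp (2*R) * g R - \<delta> * exp (2*R) / 2"
      using q by (simp add: algebra_simps)
    have "exp (2*R) * (-\<delta>/4) = - (\<delta> * exp (2*R)) / 4" "exp (2*R) * (g R - \<delta>/2) = exp (2*R) * g R - \<delta> * exp (2*R) / 2"
      by (simp_all add: algebra_simps)
    then have "exp (2*R) * (-\<delta>/4) \<le> exp (2*R) * (g R - \<delta>/2)" using a1 a2 by argo
    then have "-\<delta>/4 \<le> g R - \<delta>/2" by (rule mult_left_le_imp_le) simp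
    then show ?thesis by simp
  qed
  define R3 where "R3 = R2 + 1"
  have R3: "R3 \<ge> 1" "R3 > 0" using R2 by (auto simp: R3_def)
  define b where "b = R3 * exp (4*(\<bar>C\<bar>+1)/\<delta>)"
  have b: "R3 \<le> b" unfolding b_def using R3 d by simp
  have int1: "((\<lambda>x. \<delta>/4 * (1/x)) has_integral (\<delta>/4 * ln b - \<delta>/4 * ln R3)) {R3..b}"
  proof (rule fundamental_theorem_of_calculus[OF b])
    fix x assume "x \<in> {R3..b}"
    then have "x > 0" using R3 by auto
    then have "((\<lambda>x. \<delta>/4 * ln x) has_real_derivative \<delta>/4 * (1/x)) (at x)"
      by (auto intro!: derivative_eq_intros)
    then show "((\<lambda>x. \<delta>/4 * ln x) has_vector_derivative \<delta>/4 * (1/x)) (at x within {R3..b})"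
      using has_real_derivative_iff_has_vector_derivative has_vector_derivative_at_within by blast
  qed
  have eqC: "\<delta>/4 * ln b - \<delta>/4 * ln R3 = \<bar>C\<bar> + 1"
    using R3 d by (simp add: b_def ln_mult field_simps)
  have "\<delta>/4 * ln b - \<delta>/4 * ln R3 \<le> integral {R3..b} (\<lambda>x. x * h x)"
  proof (rule has_integral_le[OF int1])
    show "((\<lambda>x. x * h x) has_integral integral {R3..b} (\<lambda>x. x * h x)) {R3..b}"
      using R3 by (auto intro!: integrable_integral integrable_continuous_interval continuous_intros h_cont)
    fix x assume x: "x \<in> {R3..b}"
    then have "g x \<ge> \<delta>/4" "x > 0" using gl R3 by (auto simp: R3_def)
    then show "\<delta>/4 * (1/x) \<le> x * h x" by (simp add: g_def power2_eq_square field_simps)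
  qed
  also have "integral {R3..b} (\<lambda>x. x * h x) = integral {R3..b} (\<lambda>x. integral {s..t} (\<lambda>\<tau>. x*(n x \<tau>)\<^sup>2))"
    by (simp add: h_def)
  also have "\<dots> = integral {s..t} (\<lambda>\<tau>. integral {R3..b} (\<lambda>x. x*(n x \<tau>)\<^sup>2))"
  proof -
    have "continuous_on (cbox (R3,s) (b,t)) (\<lambda>(x,\<tau>). x*(n x \<tau>)\<^sup>2)"
      unfolding cbox_Pair_eq cbox_interval case_prod_beta'
      using R3 s0 by (auto intro!: continuous_intros)
    from integral_swap_continuous[OF this] show ?thesis by (simp add: cbox_interval)
  qed
  also have "\<dots> \<le> C" using C[OF R3(1) b] .
  finally show False using eqC by simp
qed

end


lemma G1:
  fixes f :: "real \<Rightarrow> real"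
  assumes "continuous_on {a..b} f" "\<And>x. x\<in>{a..b} \<Longrightarrow> 0 \<le> f x"
  shows "(\<integral>\<^sup>+x\<in>{a..b}. ennreal (f x) \<partial>lborel) = ennreal (integral {a..b} f)"
  by (rule nn_integral_has_integral_lebesgue')
     (use assms in \<open>auto intro: integrable_integral integrable_continuous_interval\<close>)

lemma G2: "A \<subseteq> B \<Longrightarrow> (\<integral>\<^sup>+x\<in>A. f x \<partial>M) \<le> (\<integral>\<^sup>+x\<in>B. f x \<partial>M)"
  by (intro nn_integral_mono) (auto split: split_indicator intro: mult_left_mono)

definition SK :: "nat \<Rightarrow> real set" where "SK k = {1/(real k+1)..real k+1}"

lemma SK_sub: "SK k \<subseteq> {0<..}"
  by (auto simp: SK_def) (smt (verit) divide_pos_pos of_nat_0_le_iff)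

lemma SK_mono: "k \<le> j \<Longrightarrow> SK k \<subseteq> SK j"
  by (auto simp: SK_def) (smt (verit, best) frac_le of_nat_0_le_iff of_nat_mono)+

lemma SK_ex: assumes "x > 0" shows "\<exists>k. x \<in> SK k"
proof -
  obtain k :: nat where k: "max x (1/x) < k" using reals_Archimedean2 by blast
  have "x \<le> real k + 1" using k by simp
  moreover have "1/(real k+1) \<le> x"
  proof -
    have "1/x < real k + 1" using k by simp
    then show ?thesis using assms by (simp add: field_simps)
  qed
  ultimately show ?thesis by (auto simp: SK_def)
qed

lemma G3:
  fixes f :: "real \<Rightarrow> real"
  assumes "continuous_on {0<..} f"
  shows "(\<integral>\<^sup>+x\<in>{0<..}. ennreal (f x) \<partial>lborel) = (SUP k. \<integral>\<^sup>+x\<in>SK k. ennreal (f x) \<partial>lborel)"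
proof -
  have meas: "(\<lambda>x. ennreal (f x) * indicator (SK k) x) \<in> borel_measurable lborel" for k
  proof -
    have c: "continuous_on (SK k) f" using continuous_on_subset[OF assms SK_sub] .
    have "(\<lambda>x. indicator (SK k) x *\<^sub>R f x) \<in> borel_measurable borel"
      by (rule borel_measurable_continuous_on_indicator[OF _ c]) (auto simp: SK_def)
    then have "(\<lambda>x. ennreal (indicator (SK k) x *\<^sub>R f x)) \<in> borel_measurable borel" by measurable
    moreover have "(\<lambda>x. ennreal (indicator (SK k) x *\<^sub>R f x)) = (\<lambda>x. ennreal (f x) * indicator (SK k) x)"
      by (auto split: split_indicator)
    ultimately show ?thesis by simp
  qed
  have inc: "incseq (\<lambda>k x. ennreal (f x) * indicator (SK k) x)"
    by (auto simp: incseq_def le_fun_def split: split_indicator dest: SK_mono)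
  have pt: "(SUP k. ennreal (f x) * indicator (SK k) x) = ennreal (f x) * indicator {0<..} x" for x
  proof (cases "x > 0")
    case True
    then obtain k where "x \<in> SK k" using SK_ex by blast
    then show ?thesis using True SK_sub
      by (intro antisym SUP_least SUP_upper2[of k]) (auto split: split_indicator)
  next
    case False
    then have "x \<notin> SK k" for k using SK_sub by auto
    then show ?thesis using False by simp
  qed
  show ?thesis
    using nn_integral_monotone_convergence_SUP[OF inc meas] pt by simp
qed

lemma ae_to_pw:
  fixes f :: "real \<Rightarrow> real"
  assumes ae: "AE x in lborel. x > 0 \<longrightarrow> \<bar>f x\<bar> \<le> M" and c: "continuous_on {0<..} f" and x: "x > 0"
  shows "f x \<le> M"
proof (rule ccontr)
  assume "\<not> f x \<le> M"
  define U where "U = {0<..} \<inter> f -` {M<..}"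
  have "open U" unfolding U_def by (rule continuous_open_preimage[OF c]) auto
  moreover have "x \<in> U" using x \<open>\<not> f x \<le> M\<close> by (auto simp: U_def)
  ultimately obtain e where e: "e > 0" "ball x e \<subseteq> U" using open_contains_ball by blast
  from ae obtain N where N: "{y \<in> space lborel. \<not> (y > 0 \<longrightarrow> \<bar>f y\<bar> \<le> M)} \<subseteq> N" "N \<in> null_sets lborel"
    unfolding eventually_ae_filter by blast
  have "{x-e<..<x+e} \<subseteq> N"
  proof
    fix y assume "y \<in> {x-e<..<x+e}"
    then have "y \<in> ball x e" by (auto simp: dist_real_def)
    then have "y \<in> U" using e by auto
    then show "y \<in> N" using N(1) by (auto simp: U_def)
  qed
  then have "emeasure lborel {x-e<..<x+e} \<le> emeasure lborel N"
    using N(2) by (intro emeasure_mono) auto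
  then show False using null_setsD1[OF N(2)] e by simp
qed


lemma G4:
  fixes g :: "real \<Rightarrow> real \<Rightarrow> real"
  assumes c: "continuous_on ({a..b}\<times>{c..d}) (\<lambda>z. g (fst z) (snd z))"
    and nn: "\<And>x \<tau>. x\<in>{a..b} \<Longrightarrow> \<tau>\<in>{c..d} \<Longrightarrow> 0 \<le> g x \<tau>"
  shows "ennreal (integral {c..d} (\<lambda>\<tau>. integral {a..b} (\<lambda>x. g x \<tau>)))
     = (\<integral>\<^sup>+\<tau>\<in>{c..d}. (\<integral>\<^sup>+x\<in>{a..b}. ennreal (g x \<tau>) \<partial>lborel) \<partial>lborel)"
proof -
  have c2: "continuous_on ({c..d}\<times>{a..b}) (\<lambda>z. g (snd z) (fst z))"
    by (rule continuous_on_compose2[OF c, of "{c..d}\<times>{a..b}" "\<lambda>z. (snd z, fst z)", simplified])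
       (auto intro!: continuous_intros)
  have cp: "continuous_on {c..d} (\<lambda>\<tau>. integral {a..b} (\<lambda>x. g x \<tau>))"
    unfolding cbox_interval[symmetric]
    by (rule integral_continuous_on_param) (use c2 in \<open>auto simp: case_prod_beta' cbox_interval\<close>)
  have cx: "continuous_on {a..b} (\<lambda>x. g x \<tau>)" if "\<tau> \<in> {c..d}" for \<tau>
    by (rule continuous_on_compose2[OF c, of "{a..b}" "\<lambda>x. (x, \<tau>)", simplified])
       (use that in \<open>auto intro!: continuous_intros\<close>)
  have inn: "0 \<le> integral {a..b} (\<lambda>x. g x \<tau>)" if "\<tau> \<in> {c..d}" for \<tau>
    using cx[OF that] nn that by (intro integral_nonneg integrable_continuous_interval) auto
  have "ennreal (integral {c..d} (\<lambda>\<tau>. integral {a..b} (\<lambda>x. g x \<tau>)))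
     = (\<integral>\<^sup>+\<tau>\<in>{c..d}. ennreal (integral {a..b} (\<lambda>x. g x \<tau>)) \<partial>lborel)"
    by (rule G1[symmetric]) (use cp inn in auto)
  also have "\<dots> = (\<integral>\<^sup>+\<tau>\<in>{c..d}. (\<integral>\<^sup>+x\<in>{a..b}. ennreal (g x \<tau>) \<partial>lborel) \<partial>lborel)"
    by (rule set_nn_integral_cong) (use cx nn in \<open>auto intro!: G1[symmetric]\<close>)
  finally show ?thesis .
qed

lemma G4nn:
  fixes g :: "real \<Rightarrow> real \<Rightarrow> real"
  assumes c: "continuous_on ({a..b}\<times>{c..d}) (\<lambda>z. g (fst z) (snd z))"
    and nn: "\<And>x \<tau>. x\<in>{a..b} \<Longrightarrow> \<tau>\<in>{c..d} \<Longrightarrow> 0 \<le> g x \<tau>"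
  shows "0 \<le> integral {c..d} (\<lambda>\<tau>. integral {a..b} (\<lambda>x. g x \<tau>))"
proof -
  have "0 \<le> ennreal (integral {c..d} (\<lambda>\<tau>. integral {a..b} (\<lambda>x. g x \<tau>)))" by simp
  have c2: "continuous_on ({c..d}\<times>{a..b}) (\<lambda>z. g (snd z) (fst z))"
    by (rule continuous_on_compose2[OF c, of "{c..d}\<times>{a..b}" "\<lambda>z. (snd z, fst z)", simplified])
       (auto intro!: continuous_intros)
  have cp: "continuous_on {c..d} (\<lambda>\<tau>. integral {a..b} (\<lambda>x. g x \<tau>))"
    unfolding cbox_interval[symmetric]
    by (rule integral_continuous_on_param) (use c2 in \<open>auto simp: case_prod_beta' cbox_interval\<close>)
  have cx: "continuous_on {a..b} (\<lambda>x. g x \<tau>)" if "\<tau> \<in> {c..d}" for \<tau>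
    by (rule continuous_on_compose2[OF c, of "{a..b}" "\<lambda>x. (x, \<tau>)", simplified])
       (use that in \<open>auto intro!: continuous_intros\<close>)
  have inn: "0 \<le> integral {a..b} (\<lambda>x. g x \<tau>)" if "\<tau> \<in> {c..d}" for \<tau>
    using cx[OF that] nn that by (intro integral_nonneg integrable_continuous_interval) auto
  show ?thesis
    by (rule integral_nonneg[OF integrable_continuous_interval[OF cp]]) (use inn in auto)
qed

context kset begin

lemma compact_ineq:
  assumes "0<\<epsilon>" "\<epsilon><R"
  shows "integral {\<epsilon>..R} (\<lambda>x. (n x t)\<^sup>2) + integral {s..t} (\<lambda>\<tau>. integral {\<epsilon>..R} (\<lambda>x. (n x \<tau>)\<^sup>2 + x\<^sup>2*(nx x \<tau>)\<^sup>2))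
   \<le> integral {\<epsilon>..R} (\<lambda>x. (n x s)\<^sup>2) + 2 * integral {s..t} (\<lambda>\<tau>. integral {\<epsilon>..R} (\<lambda>x. x*(n x \<tau>)\<^sup>2))
   + (integral {s..t} (\<lambda>\<tau>. Phi R \<tau>) - integral {s..t} (\<lambda>\<tau>. Phi \<epsilon> \<tau>))"
proof -
  have s0: "0 < s" "s \<le> t" using st by auto
  have p2: "continuous_on {s..t} (\<lambda>\<tau>. integral {\<epsilon>..R} (\<lambda>x. (n x \<tau>)\<^sup>2 + x\<^sup>2*(nx x \<tau>)\<^sup>2))"
    unfolding cbox_interval[symmetric]
    by (rule integral_continuous_on_param)
       (use assms s0 in \<open>auto simp: case_prod_beta' cbox_interval intro!: continuous_intros\<close>)
  have "0 \<le> integral {s..t} (\<lambda>\<tau>. integral {\<epsilon>..R} (\<lambda>x. (n x \<tau>)\<^sup>2 + x\<^sup>2*(nx x \<tau>)\<^sup>2))"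
  proof (rule integral_nonneg)
    show "(\<lambda>\<tau>. integral {\<epsilon>..R} (\<lambda>x. (n x \<tau>)\<^sup>2 + x\<^sup>2*(nx x \<tau>)\<^sup>2)) integrable_on {s..t}"
      using p2 by (rule integrable_continuous_interval)
    fix \<tau> assume "\<tau> \<in> {s..t}"
    then have "\<tau> > 0" using s0 by auto
    show "0 \<le> integral {\<epsilon>..R} (\<lambda>x. (n x \<tau>)\<^sup>2 + x\<^sup>2*(nx x \<tau>)\<^sup>2)"
      using assms \<open>\<tau>>0\<close>
      by (intro integral_nonneg integrable_continuous_interval) (auto intro!: continuous_intros)
  qed
  then show ?thesis using ident[OF assms] by linarith
qed

lemma Gmeas:
  "(\<lambda>\<tau>. (\<integral>\<^sup>+x\<in>SK k. ennreal ((n x \<tau>)\<^sup>2 + x\<^sup>2*(nx x \<tau>)\<^sup>2) \<partial>lborel) * indicator {s..t} \<tau>)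
     \<in> borel_measurable lborel"
proof -
  have s0: "0 < s" "s \<le> t" using st by auto
  define K where "K = {s..t} \<times> SK k"
  define Fz where "Fz z = (n (snd z) (fst z))\<^sup>2 + (snd z)\<^sup>2*(nx (snd z) (fst z))\<^sup>2" for z :: "real \<times> real"
  have cK: "continuous_on K Fz"
    unfolding Fz_def K_def using SK_sub s0
    by (intro continuous_intros) (auto simp: subset_iff)
  have "(\<lambda>z. indicator K z *\<^sub>R Fz z) \<in> borel_measurable borel"
    by (rule borel_measurable_continuous_on_indicator[OF _ cK])
       (auto simp: K_def SK_def intro!: borel_closed closed_Times)
  then have m: "(\<lambda>z. ennreal (indicator K z *\<^sub>R Fz z)) \<in> borel_measurable (lborel \<Otimes>\<^sub>M lborel)"
    unfolding lborel_prod by measurable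
  have "(\<lambda>\<tau>. \<integral>\<^sup>+x. ennreal (indicator K (\<tau>,x) *\<^sub>R Fz (\<tau>,x)) \<partial>lborel) \<in> borel_measurable lborel"
    using lborel.borel_measurable_nn_integral[of "\<lambda>\<tau> x. ennreal (indicator K (\<tau>,x) *\<^sub>R Fz (\<tau>,x))" lborel] m
    by simp
  moreover have "(\<lambda>\<tau>. \<integral>\<^sup>+x. ennreal (indicator K (\<tau>,x) *\<^sub>R Fz (\<tau>,x)) \<partial>lborel) =
     (\<lambda>\<tau>. (\<integral>\<^sup>+x\<in>SK k. ennreal ((n x \<tau>)\<^sup>2 + x\<^sup>2*(nx x \<tau>)\<^sup>2) \<partial>lborel) * indicator {s..t} \<tau>)"
  proof
    fix \<tau>
    show "(\<integral>\<^sup>+x. ennreal (indicator K (\<tau>,x) *\<^sub>R Fz (\<tau>,x)) \<partial>lborel) =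
       (\<integral>\<^sup>+x\<in>SK k. ennreal ((n x \<tau>)\<^sup>2 + x\<^sup>2*(nx x \<tau>)\<^sup>2) \<partial>lborel) * indicator {s..t} \<tau>"
    proof (cases "\<tau> \<in> {s..t}")
      case True
      then show ?thesis
        by (simp, intro nn_integral_cong) (auto simp: K_def Fz_def split: split_indicator)
    next
      case False
      then have "\<And>x. indicator K (\<tau>,x) = (0::real)" by (auto simp: K_def indicator_def)
      then show ?thesis using False by simp
    qed
  qed
  ultimately show ?thesis by simp
qed


lemma final:
  shows "(\<integral>\<^sup>+ x \<in> {0<..}. ennreal ((n x t)\<^sup>2) \<partial>lborel)
         + (\<integral>\<^sup>+ \<tau> \<in> {s..t}. (\<integral>\<^sup>+ x \<in> {0<..}.
               ennreal ((n x \<tau>)\<^sup>2 + x\<^sup>2 * (deriv (\<lambda>y. n y \<tau>) x)\<^sup>2) \<partial>lborel) \<partial>lborel)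
       \<le> (\<integral>\<^sup>+ x \<in> {0<..}. ennreal ((n x s)\<^sup>2) \<partial>lborel)
         + 2 * (\<integral>\<^sup>+ \<tau> \<in> {s..t}. (\<integral>\<^sup>+ x \<in> {0<..}.
               ennreal (x * (n x \<tau>)\<^sup>2) \<partial>lborel) \<partial>lborel)"
    (is "?L1 + ?L2 \<le> ?R1 + 2 * ?R2")
proof -
  have s0: "0 < s" "s \<le> t" using st by auto
  define F where "F x \<tau> = (n x \<tau>)\<^sup>2 + x\<^sup>2*(nx x \<tau>)\<^sup>2" for x \<tau>
  have L2: "?L2 = (\<integral>\<^sup>+ \<tau> \<in> {s..t}. (\<integral>\<^sup>+ x \<in> {0<..}. ennreal (F x \<tau>) \<partial>lborel) \<partial>lborel)"
  proof (rule set_nn_integral_cong)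
    fix \<tau> assume "\<tau> \<in> space lborel \<inter> {s..t}"
    then have "\<tau> > 0" using s0 by auto
    show "(\<integral>\<^sup>+ x \<in> {0<..}. ennreal ((n x \<tau>)\<^sup>2 + x\<^sup>2 * (deriv (\<lambda>y. n y \<tau>) x)\<^sup>2) \<partial>lborel) =
        (\<integral>\<^sup>+ x \<in> {0<..}. ennreal (F x \<tau>) \<partial>lborel)"
      by (rule set_nn_integral_cong) (use \<open>\<tau>>0\<close> in \<open>auto simp: F_def DERIV_imp_deriv[OF dn]\<close>)
  qed auto
  show ?thesis
  proof (cases "?R2 = top")
    case True
    then show ?thesis by (simp add: ennreal_mult_top)
  next
    case False
    then obtain C where C: "?R2 = ennreal C" "0 \<le> C" by (cases "?R2" rule: ennreal_cases) auto
    have Cb: "integral {s..t} (\<lambda>\<tau>. integral {a..b} (\<lambda>x. x*(n x \<tau>)\<^sup>2)) \<le> C"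
      if ab: "1 \<le> a" "a \<le> b" for a b
    proof -
      have "ennreal (integral {s..t} (\<lambda>\<tau>. integral {a..b} (\<lambda>x. x*(n x \<tau>)\<^sup>2)))
         = (\<integral>\<^sup>+\<tau>\<in>{s..t}. (\<integral>\<^sup>+x\<in>{a..b}. ennreal (x*(n x \<tau>)\<^sup>2) \<partial>lborel) \<partial>lborel)"
        by (rule G4) (use ab s0 in \<open>auto intro!: continuous_intros\<close>)
      also have "\<dots> \<le> ?R2"
        by (intro nn_integral_mono mult_right_mono G2) (use ab in auto)
      finally have "ennreal (integral {s..t} (\<lambda>\<tau>. integral {a..b} (\<lambda>x. x*(n x \<tau>)\<^sup>2))) \<le> ennreal C"
        using C by simp
      then show ?thesis using C(2) by (simp add: ennreal_le_iff)
    qed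
    define A where "A k = (\<integral>\<^sup>+ x \<in> SK k. ennreal ((n x t)\<^sup>2) \<partial>lborel)" for k
    define B where "B k = (\<integral>\<^sup>+ \<tau> \<in> {s..t}. (\<integral>\<^sup>+ x \<in> SK k. ennreal (F x \<tau>) \<partial>lborel) \<partial>lborel)" for k
    have AB: "A k + B k \<le> ?R1 + 2 * ?R2" for k
    proof (rule ennreal_le_epsilon)
      fix e :: real assume "0 < e"
      have ak: "0 < 1/(real k+1)" "1/(real k+1) \<le> 1" by (auto simp: field_simps)
      obtain \<epsilon> where \<epsilon>: "0 < \<epsilon>" "\<epsilon> < 1/(real k+1)" "- integral {s..t} (\<lambda>\<tau>. Phi \<epsilon> \<tau>) < e/2"
        using lower[of "e/2" "1/(real k+1)"] \<open>0<e\<close> ak by auto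
      obtain R where R: "R > real k + 1" "integral {s..t} (\<lambda>\<tau>. Phi R \<tau>) < e/2"
        using upper[OF Cb, of "e/2" "real k + 1"] \<open>0<e\<close> by auto
      have eR: "\<epsilon> < R" using \<epsilon> R ak by linarith
      have SKs: "SK k \<subseteq> {\<epsilon>..R}" using \<epsilon> R by (auto simp: SK_def)
      define It where "It = integral {\<epsilon>..R} (\<lambda>x. (n x t)\<^sup>2)"
      define Is where "Is = integral {\<epsilon>..R} (\<lambda>x. (n x s)\<^sup>2)"
      define JF where "JF = integral {s..t} (\<lambda>\<tau>. integral {\<epsilon>..R} (\<lambda>x. F x \<tau>))"
      define JX where "JX = integral {s..t} (\<lambda>\<tau>. integral {\<epsilon>..R} (\<lambda>x. x*(n x \<tau>)\<^sup>2))"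
      have eIt: "(\<integral>\<^sup>+ x \<in> {\<epsilon>..R}. ennreal ((n x t)\<^sup>2) \<partial>lborel) = ennreal It"
        unfolding It_def by (rule G1) (use \<epsilon> s0 in \<open>auto intro!: continuous_intros\<close>)
      have eIs: "(\<integral>\<^sup>+ x \<in> {\<epsilon>..R}. ennreal ((n x s)\<^sup>2) \<partial>lborel) = ennreal Is"
        unfolding Is_def by (rule G1) (use \<epsilon> s0 in \<open>auto intro!: continuous_intros\<close>)
      have eJF: "ennreal JF = (\<integral>\<^sup>+\<tau>\<in>{s..t}. (\<integral>\<^sup>+x\<in>{\<epsilon>..R}. ennreal (F x \<tau>) \<partial>lborel) \<partial>lborel)"
        unfolding JF_def F_def by (rule G4) (use \<epsilon> s0 in \<open>auto intro!: continuous_intros\<close>)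
      have eJX: "ennreal JX = (\<integral>\<^sup>+\<tau>\<in>{s..t}. (\<integral>\<^sup>+x\<in>{\<epsilon>..R}. ennreal (x*(n x \<tau>)\<^sup>2) \<partial>lborel) \<partial>lborel)"
        unfolding JX_def by (rule G4) (use \<epsilon> s0 in \<open>auto intro!: continuous_intros\<close>)
      have It0: "0 \<le> It" unfolding It_def
        by (intro integral_nonneg integrable_continuous_interval) (use \<epsilon> s0 in \<open>auto intro!: continuous_intros\<close>)
      have JF0: "0 \<le> JF" "0 \<le> JX" "0 \<le> Is"
      proof -
        show "0 \<le> JF" unfolding JF_def F_def
          by (rule G4nn) (use \<epsilon> s0 in \<open>auto intro!: continuous_intros\<close>)
        show "0 \<le> JX" unfolding JX_def
          by (rule G4nn) (use \<epsilon> s0 in \<open>auto intro!: continuous_intros\<close>)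
        show "0 \<le> Is" unfolding Is_def
          by (intro integral_nonneg integrable_continuous_interval) (use \<epsilon> s0 in \<open>auto intro!: continuous_intros\<close>)
      qed
      have real: "It + JF \<le> Is + 2 * JX + e"
        using compact_ineq[OF \<epsilon>(1) eR] \<epsilon>(3) R(2) unfolding It_def Is_def JF_def JX_def F_def
        by linarith
      have "A k + B k \<le> ennreal It + ennreal JF"
      proof (intro add_mono)
        show "A k \<le> ennreal It" unfolding A_def eIt[symmetric] by (rule G2[OF SKs])
        show "B k \<le> ennreal JF" unfolding B_def eJF
          by (intro nn_integral_mono mult_right_mono G2[OF SKs]) auto
      qed
      also have "\<dots> = ennreal (It + JF)" using It0 JF0 by (simp add: ennreal_plus)
      also have "\<dots> \<le> ennreal (Is + 2 * JX + e)" using real by (rule ennreal_leI)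
      also have "\<dots> = ennreal Is + 2 * ennreal JX + ennreal e"
        using JF0 \<open>0<e\<close> by (simp add: ennreal_plus ennreal_mult)
      also have "\<dots> \<le> ?R1 + 2 * ?R2 + ennreal e"
      proof (intro add_mono mult_left_mono order_refl)
        show "ennreal Is \<le> ?R1" unfolding eIs[symmetric]
          by (rule G2) (use \<epsilon> in auto)
        show "ennreal JX \<le> ?R2" unfolding eJX
          by (intro nn_integral_mono mult_right_mono G2) (use \<epsilon> in auto)
      qed auto
      finally show "A k + B k \<le> ?R1 + 2 * ?R2 + ennreal e" .
    qed
    have L1: "?L1 = (SUP k. A k)" unfolding A_def
      by (rule G3) (use s0 in \<open>auto intro!: continuous_intros\<close>)
    have L2': "?L2 = (SUP k. B k)"
    proof -
      have "?L2 = (\<integral>\<^sup>+ \<tau> \<in> {s..t}. (SUP k. \<integral>\<^sup>+ x \<in> SK k. ennreal (F x \<tau>) \<partial>lborel) \<partial>lborel)"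
      proof -
        have g3: "(\<integral>\<^sup>+ x \<in> {0<..}. ennreal (F x \<tau>) \<partial>lborel) = (SUP k. \<integral>\<^sup>+ x \<in> SK k. ennreal (F x \<tau>) \<partial>lborel)"
          if "\<tau> \<in> {s..t}" for \<tau>
          by (rule G3) (use s0 that in \<open>auto simp: F_def intro!: continuous_intros\<close>)
        show ?thesis unfolding L2
          by (rule set_nn_integral_cong) (use g3 in auto)
      qed
      also have "\<dots> = (\<integral>\<^sup>+ \<tau>. (SUP k. (\<integral>\<^sup>+ x \<in> SK k. ennreal (F x \<tau>) \<partial>lborel) * indicator {s..t} \<tau>) \<partial>lborel)"
        by (intro nn_integral_cong) (auto split: split_indicator)
      also have "\<dots> = (SUP k. B k)" unfolding B_def
      proof (rule nn_integral_monotone_convergence_SUP)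
        show "incseq (\<lambda>k \<tau>. (\<integral>\<^sup>+ x \<in> SK k. ennreal (F x \<tau>) \<partial>lborel) * indicator {s..t} \<tau>)"
          by (auto simp: incseq_def le_fun_def intro!: mult_right_mono G2 SK_mono)
        fix k show "(\<lambda>\<tau>. (\<integral>\<^sup>+ x \<in> SK k. ennreal (F x \<tau>) \<partial>lborel) * indicator {s..t} \<tau>) \<in> borel_measurable lborel"
          using Gmeas[of k] by (simp add: F_def)
      qed
      finally show ?thesis .
    qed
    have incA: "incseq A" unfolding A_def incseq_def by (auto intro!: G2 SK_mono)
    have incB: "incseq B" unfolding B_def incseq_def
      by (auto intro!: nn_integral_mono mult_right_mono G2 SK_mono)
    have "?L1 + ?L2 = (SUP k. A k + B k)"
      unfolding L1 L2' by (rule ennreal_SUP_add[OF incA incB, symmetric])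
    also have "\<dots> \<le> ?R1 + 2 * ?R2" by (rule SUP_least) (rule AB)
    finally show ?thesis .
  qed
qed

end



theorem proposition3p11:
  fixes n0 :: "real \<Rightarrow> real" and n :: "real \<Rightarrow> real \<Rightarrow> real" and s t :: real
  assumes meas: "n0 \<in> borel_measurable lborel"
    and nonneg: "\<forall>x>0. 0 \<le> n0 x"
    and bdd: "\<exists>B. \<forall>x>0. \<bar>n0 x\<bar> \<le> B"
    and decay: "((\<lambda>x. x\<^sup>2 * n0 x) \<longlongrightarrow> 0) at_top"
    and sol: "kompaneets_solution n0 n"
    and st: "0 < s" "s < t"
  shows "(\<integral>\<^sup>+ x \<in> {0<..}. ennreal ((n x t)\<^sup>2) \<partial>lborel)
         + (\<integral>\<^sup>+ \<tau> \<in> {s..t}. (\<integral>\<^sup>+ x \<in> {0<..}.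
               ennreal ((n x \<tau>)\<^sup>2 + x\<^sup>2 * (deriv (\<lambda>y. n y \<tau>) x)\<^sup>2) \<partial>lborel) \<partial>lborel)
       \<le> (\<integral>\<^sup>+ x \<in> {0<..}. ennreal ((n x s)\<^sup>2) \<partial>lborel)
         + 2 * (\<integral>\<^sup>+ \<tau> \<in> {s..t}. (\<integral>\<^sup>+ x \<in> {0<..}.
               ennreal (x * (n x \<tau>)\<^sup>2) \<partial>lborel) \<partial>lborel)"
proof -
  have nn: "\<forall>x>0. \<forall>t>0. 0 \<le> n x t"
    and Linf: "\<forall>T>0. \<exists>M. \<forall>t\<in>{0..T}. AE x in lborel. x > 0 \<longrightarrow> \<bar>n x t\<bar> \<le> M"
    using sol unfolding kompaneets_solution_def by auto
  from sol obtain nx nxx nt :: "real \<Rightarrow> real \<Rightarrow> real" where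
    c: "continuous_on ({0<..} \<times> {0<..}) (\<lambda>(x,t). n x t)"
       "continuous_on ({0<..} \<times> {0<..}) (\<lambda>(x,t). nx x t)"
       "continuous_on ({0<..} \<times> {0<..}) (\<lambda>(x,t). nt x t)"
    and d: "\<forall>x>0. \<forall>t>0.
           ((\<lambda>y. n y t) has_real_derivative nx x t) (at x) \<and>
           ((\<lambda>y. nx y t) has_real_derivative nxx x t) (at x) \<and>
           ((\<lambda>s. n x s) has_real_derivative nt x t) (at t) \<and>
           ((\<lambda>y. kflux y (n y t) (nx y t)) has_real_derivative nt x t) (at x)"
    unfolding kompaneets_solution_def by blast
  obtain M where M: "\<forall>\<tau>\<in>{0..t}. AE x in lborel. x > 0 \<longrightarrow> \<bar>n x \<tau>\<bar> \<le> M"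
    using Linf st by force
  interpret kset n nx nt s t M
  proof
    show "0 < s" "s < t" using st by auto
    show "continuous_on ({0<..}\<times>{0<..}) (\<lambda>z. n (fst z) (snd z))"
      using c(1) by (simp add: case_prod_beta')
    show "continuous_on ({0<..}\<times>{0<..}) (\<lambda>z. nx (fst z) (snd z))"
      using c(2) by (simp add: case_prod_beta')
    show "continuous_on ({0<..}\<times>{0<..}) (\<lambda>z. nt (fst z) (snd z))"
      using c(3) by (simp add: case_prod_beta')
    fix x \<tau> :: real
    assume x: "x > 0"
    { assume "\<tau> > 0"
      then show "((\<lambda>y. n y \<tau>) has_real_derivative nx x \<tau>) (at x)"
        "((\<lambda>\<sigma>. n x \<sigma>) has_real_derivative nt x \<tau>) (at \<tau>)"
        "((\<lambda>y. kflux y (n y \<tau>) (nx y \<tau>)) has_real_derivative nt x \<tau>) (at x)"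
        "0 \<le> n x \<tau>"
        using d nn x by auto }
    { assume \<tau>: "\<tau> \<in> {s..t}"
      then have "\<tau> > 0" using st by auto
      have cont: "continuous_on {0<..} (\<lambda>y. n y \<tau>)"
        by (rule DERIV_continuous_on[of _ _ "\<lambda>y. nx y \<tau>"])
           (use d \<open>\<tau>>0\<close> in \<open>auto intro: has_field_derivative_at_within\<close>)
      have "AE y in lborel. y > 0 \<longrightarrow> \<bar>n y \<tau>\<bar> \<le> M" using M \<tau> st by auto
      from ae_to_pw[OF this cont x] show "n x \<tau> \<le> M" . }
  qed
  show ?thesis by (rule final)
qed

end
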